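(* For every word $a_1\cdots a_n$ over a finite alphabet $A$, the following algorithm outputs, for each $i$, the value $x_i$ equal to the minimal length of an X-ranker $r$ with $r(a_1\cdots a_n)=i$: initialize $n_a\gets1$ for all $a\in A$; for $i=1,\dots,n$: let $c=a_i$, set $x_i\gets n_c$, then $n_c\gets n_c+1$, then for all $a\in A$ set $n_a\gets\min(n_a,n_c)$.
   Context: An X-ranker is a nonempty word over $\{\mathsf X_a : a\in A\}$; its length is its length as a word. For a word $w$, $\mathsf X_a(w)$ is the smallest $a$-position of $w$ and $r\mathsf X_a(w)$ is the smallest $a$-position greater than $r(w)$ (possibly undefined). *)

theory Defs
  imports Main
begin

text \<open>Words are lists; positions are 1-based: position i of w carries letter w ! (i - 1).\<close>

definition next_pos :: "'a list \<Rightarrow> nat \<Rightarrow> 'a \<Rightarrow> nat option" where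
  "next_pos w p a =
     (if \<exists>i. p < i \<and> i \<le> length w \<and> w ! (i - 1) = a
      then Some (LEAST i. p < i \<and> i \<le> length w \<and> w ! (i - 1) = a)
      else None)"

text \<open>An X-ranker X_{b1} ... X_{bk} is represented by the list [b1,...,bk].\<close>
fun eval_from :: "'a list \<Rightarrow> nat \<Rightarrow> 'a list \<Rightarrow> nat option" where
  "eval_from w p [] = Some p"
| "eval_from w p (a # r) = (case next_pos w p a of None \<Rightarrow> None | Some q \<Rightarrow> eval_from w q r)"

definition xrank_eval :: "'a list \<Rightarrow> 'a list \<Rightarrow> nat option" where
  "xrank_eval r w = eval_from w 0 r"

text \<open>The algorithm: state n :: 'a \<Rightarrow> nat (only the values on A matter).\<close>
fun alg_run :: "'a set \<Rightarrow> ('a \<Rightarrow> nat) \<Rightarrow> 'a list \<Rightarrow> nat list" where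
  "alg_run A n [] = []"
| "alg_run A n (c # w) =
     (let x = n c;
          n1 = n(c := n c + 1);
          n2 = (\<lambda>a. if a \<in> A then min (n1 a) (n1 c) else n1 a)
      in x # alg_run A n2 w)"

definition algorithm :: "'a set \<Rightarrow> 'a list \<Rightarrow> nat list" where
  "algorithm A w = alg_run A (\<lambda>_. 1) w"

end

theory Submission
  imports Defs
begin

definition stp :: "'a list \<Rightarrow> (nat \<times> nat) set" where
  "stp w = {(p,q). p < q \<and> q \<le> length w \<and> (\<forall>j. p < j \<and> j < q \<longrightarrow> w!(j-1) \<noteq> w!(q-1))}"

definition dd :: "'a list \<Rightarrow> nat \<Rightarrow> nat" where
  "dd w q = (LEAST k. (0,q) \<in> stp w ^^ k)"

definition Pset :: "'a list \<Rightarrow> nat \<Rightarrow> 'a \<Rightarrow> nat set" where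
  "Pset w i a = {p. p \<le> i \<and> (\<forall>j. p < j \<and> j \<le> i \<longrightarrow> w!(j-1) \<noteq> a)}"

definition SS :: "'a list \<Rightarrow> nat \<Rightarrow> 'a \<Rightarrow> nat" where
  "SS w i a = Min ((\<lambda>p. dd w p + 1) ` Pset w i a)"

lemma next_pos_stp:
  assumes "next_pos w p a = Some q"
  shows "(p,q) \<in> stp w \<and> w!(q-1) = a"
proof -
  let ?P = "\<lambda>i. p < i \<and> i \<le> length w \<and> w ! (i - 1) = a"
  have ex: "\<exists>i. ?P i" using assms unfolding next_pos_def by (auto split: if_splits)
  hence q: "q = (LEAST i. ?P i)" using assms unfolding next_pos_def by auto
  have "?P q" using LeastI_ex[OF ex] q by simp
  moreover have "\<And>j. j < q \<Longrightarrow> \<not> ?P j" using q not_less_Least by blast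
  ultimately show ?thesis unfolding stp_def by force
qed

lemma stp_next_pos:
  assumes "(p,q) \<in> stp w"
  shows "next_pos w p (w!(q-1)) = Some q"
proof -
  let ?P = "\<lambda>i. p < i \<and> i \<le> length w \<and> w ! (i - 1) = w!(q-1)"
  have Pq: "?P q" using assms unfolding stp_def by auto
  have "(LEAST i. ?P i) = q"
  proof (rule Least_equality)
    show "?P q" by fact
    fix y assume "?P y"
    show "q \<le> y"
    proof (rule ccontr)
      assume "\<not> q \<le> y"
      thus False using assms \<open>?P y\<close> unfolding stp_def by auto
    qed
  qed
  thus ?thesis using Pq unfolding next_pos_def by auto
qed

lemma eval_relpow:
  assumes "set w \<subseteq> A"
  shows "(\<exists>r. set r \<subseteq> A \<and> length r = k \<and> eval_from w p r = Some q) \<longleftrightarrow> (p,q) \<in> stp w ^^ k"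
proof (induction k arbitrary: p)
  case 0
  then show ?case by auto
next
  case (Suc k)
  show ?case
  proof
    assume "\<exists>r. set r \<subseteq> A \<and> length r = Suc k \<and> eval_from w p r = Some q"
    then obtain a r where r: "set r \<subseteq> A" "a \<in> A" "length r = k" "eval_from w p (a#r) = Some q"
      by (metis Suc_length_conv insert_subset list.simps(15))
    then obtain q' where q': "next_pos w p a = Some q'" "eval_from w q' r = Some q"
      by (auto split: option.splits)
    have "(p,q') \<in> stp w" using next_pos_stp[OF q'(1)] by simp
    moreover have "(q',q) \<in> stp w ^^ k" using Suc.IH r q' by blast
    ultimately show "(p,q) \<in> stp w ^^ Suc k" by (rule relpow_Suc_I2)
  next
    assume "(p,q) \<in> stp w ^^ Suc k"
    then obtain q' where q': "(p,q') \<in> stp w" "(q',q) \<in> stp w ^^ k" using relpow_Suc_D2 by metis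
    then obtain r where r: "set r \<subseteq> A" "length r = k" "eval_from w q' r = Some q" using Suc.IH by blast
    have "q' \<le> length w" "0 < q'" using q'(1) unfolding stp_def by auto
    hence "q' - 1 < length w" by arith
    hence "w!(q'-1) \<in> set w" by (rule nth_mem)
    hence inA: "w!(q'-1) \<in> A" using assms by auto
    have "eval_from w p (w!(q'-1) # r) = Some q" using stp_next_pos[OF q'(1)] r by simp
    thus "\<exists>r. set r \<subseteq> A \<and> length r = Suc k \<and> eval_from w p r = Some q"
      using r inA by (intro exI[of _ "w!(q'-1) # r"]) auto
  qed
qed

lemma reach: "q \<le> length w \<Longrightarrow> (0,q) \<in> stp w ^^ q"
proof (induction q)
  case 0 then show ?case by simp
next
  case (Suc q)
  have "(q, Suc q) \<in> stp w" using Suc.prems unfolding stp_def by auto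
  thus ?case using Suc by (meson Suc_leD relpow_Suc_I)
qed

lemma dd_reach: "q \<le> length w \<Longrightarrow> (0,q) \<in> stp w ^^ dd w q"
  unfolding dd_def using reach by (metis LeastI)

lemma dd_rec:
  assumes "i < length w"
  shows "dd w (Suc i) = Min ((\<lambda>p. dd w p + 1) ` Pset w i (w!i))"
proof -
  have Pe: "Pset w i (w!i) = {p. (p, Suc i) \<in> stp w}"
    using assms unfolding Pset_def stp_def by (auto simp: less_Suc_eq_le)
  show ?thesis
  proof (rule Min_eqI[symmetric])
    show "finite ((\<lambda>p. dd w p + 1) ` Pset w i (w!i))" unfolding Pset_def by auto
  next
    fix y assume "y \<in> (\<lambda>p. dd w p + 1) ` Pset w i (w!i)"
    then obtain p where p: "(p, Suc i) \<in> stp w" "y = dd w p + 1" using Pe by auto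
    have "p \<le> length w" using p unfolding stp_def by auto
    hence "(0,p) \<in> stp w ^^ dd w p" by (rule dd_reach)
    hence "(0, Suc i) \<in> stp w ^^ Suc (dd w p)" using p(1) by (rule relpow_Suc_I)
    thus "dd w (Suc i) \<le> y" unfolding p(2) dd_def by (simp add: Least_le)
  next
    have h: "(0, Suc i) \<in> stp w ^^ dd w (Suc i)" using assms by (intro dd_reach) simp
    have "dd w (Suc i) \<noteq> 0" using h by (metis Zero_not_Suc pair_in_Id_conv relpow.simps(1))
    then obtain m where m: "dd w (Suc i) = Suc m" using not0_implies_Suc by blast
    then obtain p where p: "(0,p) \<in> stp w ^^ m" "(p, Suc i) \<in> stp w" using h relpow_Suc_E by metis
    have "dd w p \<le> m" unfolding dd_def using p(1) by (simp add: Least_le)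
    moreover have "dd w p + 1 \<ge> dd w (Suc i)"
    proof -
      have "p \<le> length w" using p unfolding stp_def by auto
      hence "(0,p) \<in> stp w ^^ dd w p" by (rule dd_reach)
      hence "(0, Suc i) \<in> stp w ^^ Suc (dd w p)" using p(2) by (rule relpow_Suc_I)
      thus ?thesis unfolding dd_def by (simp add: Least_le)
    qed
    ultimately have "dd w (Suc i) = dd w p + 1" using m by simp
    thus "dd w (Suc i) \<in> (\<lambda>p. dd w p + 1) ` Pset w i (w!i)" using Pe p by auto
  qed
qed

lemma Pset_ne: "finite (Pset w i a) \<and> i \<in> Pset w i a"
  unfolding Pset_def by auto

lemma Pset_c: "Pset w (Suc i) (w!i) = {Suc i}"
  unfolding Pset_def apply auto
  subgoal for x by (drule spec[of _ "Suc i"]) auto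
  done

lemma Pset_a: "a \<noteq> w!i \<Longrightarrow> Pset w (Suc i) a = insert (Suc i) (Pset w i a)"
  unfolding Pset_def by (auto simp: le_Suc_eq)

lemma main:
  assumes "set w \<subseteq> A"
  shows "length w = i + m \<Longrightarrow> (\<forall>a\<in>A. nn a = SS w i a) \<Longrightarrow> alg_run A nn (drop i w) = map (dd w) [Suc i..<Suc (length w)]"
proof (induction m arbitrary: i nn)
  case 0
  then show ?case by simp
next
  case (Suc m)
  let ?c = "w!i"
  have il: "i < length w" using Suc.prems by simp
  have cA: "?c \<in> A" using il assms by auto
  have dr: "drop i w = ?c # drop (Suc i) w" using il by (simp add: Cons_nth_drop_Suc)
  have x: "nn ?c = dd w (Suc i)" using Suc.prems(2) cA dd_rec[OF il] unfolding SS_def by simp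
  define n2 where "n2 = (\<lambda>a. if a \<in> A then min ((nn(?c := nn ?c + 1)) a) ((nn(?c := nn ?c + 1)) ?c) else (nn(?c := nn ?c + 1)) a)"
  have n2: "\<forall>a\<in>A. n2 a = SS w (Suc i) a"
  proof
    fix a assume aA: "a \<in> A"
    show "n2 a = SS w (Suc i) a"
    proof (cases "a = ?c")
      case True
      then show ?thesis using aA x unfolding n2_def SS_def by (simp add: Pset_c)
    next
      case False
      have "SS w (Suc i) a = min (dd w (Suc i) + 1) (SS w i a)"
        unfolding SS_def Pset_a[OF False] image_insert using Pset_ne[of w i a]
        by (subst Min_insert) auto
      then show ?thesis using aA x False Suc.prems(2) unfolding n2_def by auto
    qed
  qed
  have "alg_run A n2 (drop (Suc i) w) = map (dd w) [Suc (Suc i)..<Suc (length w)]"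
    using Suc.IH[of "Suc i" n2] Suc.prems n2 by (simp del: upt_Suc)
  moreover have "[Suc i..<Suc (length w)] = Suc i # [Suc (Suc i)..<Suc (length w)]"
    using il by (simp add: upt_conv_Cons del: upt_Suc)
  ultimately show ?case unfolding dr alg_run.simps Let_def n2_def[symmetric] using x by (simp del: upt_Suc)
qed

theorem lemma15:
  fixes A :: "'a set" and w :: "'a list"
  assumes "finite A" and "set w \<subseteq> A"
  shows "length (algorithm A w) = length w \<and>
         (\<forall>i. 1 \<le> i \<and> i \<le> length w \<longrightarrow>
            algorithm A w ! (i - 1) =
              (LEAST k. \<exists>r. r \<noteq> [] \<and> set r \<subseteq> A \<and> length r = k \<and> xrank_eval r w = Some i))"
proof -
  have init: "\<forall>a\<in>A. (\<lambda>_. 1) a = SS w 0 a"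
  proof
    fix a
    have "Pset w 0 a = {0}" unfolding Pset_def by auto
    moreover have "dd w 0 = 0" unfolding dd_def by (simp add: Least_eq_0)
    ultimately show "(\<lambda>_. 1::nat) a = SS w 0 a" unfolding SS_def by simp
  qed
  have alg: "algorithm A w = map (dd w) [Suc 0..<Suc (length w)]"
    using main[OF assms(2), of 0 "length w" "\<lambda>_. 1"] init unfolding algorithm_def by (simp del: upt_Suc)
  show ?thesis
  proof (intro conjI allI impI)
    show "length (algorithm A w) = length w" using alg by (simp del: upt_Suc)
  next
    fix i assume i: "1 \<le> i \<and> i \<le> length w"
    have len: "i - 1 < length [Suc 0..<Suc (length w)]" using i by (simp only: length_upt) arith
    have "[Suc 0..<Suc (length w)] ! (i - 1) = i" using i by (subst nth_upt) auto
    hence "algorithm A w ! (i - 1) = dd w i" unfolding alg nth_map[OF len] by simp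
    moreover have "\<And>k. (\<exists>r. r \<noteq> [] \<and> set r \<subseteq> A \<and> length r = k \<and> xrank_eval r w = Some i) \<longleftrightarrow> (0,i) \<in> stp w ^^ k"
    proof -
      fix k
      have "(0,i) \<in> stp w ^^ k \<Longrightarrow> k \<noteq> 0" using i by (cases k) auto
      thus "?thesis k" using eval_relpow[OF assms(2), of k 0 i] unfolding xrank_eval_def by auto
    qed
    ultimately show "algorithm A w ! (i - 1) = (LEAST k. \<exists>r. r \<noteq> [] \<and> set r \<subseteq> A \<and> length r = k \<and> xrank_eval r w = Some i)"
      unfolding dd_def by simp
  qed
qed

end
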